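(* There exist absolute constants $c>0$ and $n_0$ such that for every $n\ge n_0$, every $\epsilon\in(3\ln n/n,\,1/12)$, and every $\epsilon$-differentially private algorithm $M$ that takes as input a graph on a fixed vertex set $V$ with $|V|=n$ and outputs a cut $(S,V\setminus S)$ with $\emptyset\ne S\subsetneq V$, there exists a graph $G=(V,E)$ such that $\mathbb{E}[\mathrm{Cost}(G,M(G))]\ge \mathrm{OPT}(G)+c\ln n/\epsilon$.
   Context: A randomized algorithm $M$ on graphs with vertex set $V$ is $\epsilon$-differentially private if for any two edge sets $E,E'$ on $V$ whose symmetric difference has size one and any set $\mathcal{O}$ of outputs, $\Pr[M(V,E)\in\mathcal{O}]\le e^{\epsilon}\Pr[M(V,E')\in\mathcal{O}]$. For a graph $G$ and cut $(S,V\setminus S)$, $\mathrm{Cost}(G,(S,V\setminus S))$ is the number of edges of $G$ with exactly one endpoint in $S$, and $\mathrm{OPT}(G)$ is the minimum of this quantity over all $\emptyset\ne S\subsetneq V$. *)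

theory Defs
  imports "HOL-Probability.Probability"
begin

definition all_edges :: "nat set \<Rightarrow> nat set set" where
  "all_edges V = {e. e \<subseteq> V \<and> card e = 2}"

definition is_graph_on :: "nat set \<Rightarrow> nat set set \<Rightarrow> bool" where
  "is_graph_on V E \<longleftrightarrow> E \<subseteq> all_edges V"

definition cuts :: "nat set \<Rightarrow> nat set set" where
  "cuts V = {S. S \<noteq> {} \<and> S \<subset> V}"

definition cut_cost :: "nat set set \<Rightarrow> nat set \<Rightarrow> nat" where
  "cut_cost E S = card {e \<in> E. card (e \<inter> S) = 1}"

definition OPT :: "nat set \<Rightarrow> nat set set \<Rightarrow> nat" where
  "OPT V E = Min (cut_cost E ` cuts V)"

definition dp_cut_algorithm :: "nat set \<Rightarrow> real \<Rightarrow> (nat set set \<Rightarrow> nat set pmf) \<Rightarrow> bool" where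
  "dp_cut_algorithm V eps M \<longleftrightarrow>
     (\<forall>E. is_graph_on V E \<longrightarrow> set_pmf (M E) \<subseteq> cuts V) \<and>
     (\<forall>E E' Out. is_graph_on V E \<longrightarrow> is_graph_on V E' \<longrightarrow>
        card ((E - E') \<union> (E' - E)) = 1 \<longrightarrow>
        measure_pmf.prob (M E) Out \<le> exp eps * measure_pmf.prob (M E') Out)"

end

theory Submission
  imports Defs
begin

lemma dp_chain:
  assumes dp: "dp_cut_algorithm V eps M" and g: "is_graph_on V E0"
    and fin: "finite R" and sub: "R \<subseteq> E0"
  shows "measure_pmf.prob (M (E0 - R)) A \<le> exp (eps * card R) * measure_pmf.prob (M E0) A"
  using fin sub
proof (induction R rule: finite_induct)
  case empty
  show ?case by simp
next
  case (insert x F)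
  have g1: "is_graph_on V (E0 - insert x F)" and g2: "is_graph_on V (E0 - F)"
    using g by (auto simp: is_graph_on_def)
  have "((E0 - insert x F) - (E0 - F)) \<union> ((E0 - F) - (E0 - insert x F)) = {x}"
    using insert by auto
  hence c: "card (((E0 - insert x F) - (E0 - F)) \<union> ((E0 - F) - (E0 - insert x F))) = 1" by simp
  have "measure_pmf.prob (M (E0 - insert x F)) A \<le> exp eps * measure_pmf.prob (M (E0 - F)) A"
    using dp g1 g2 c unfolding dp_cut_algorithm_def by blast
  also have "\<dots> \<le> exp eps * (exp (eps * card F) * measure_pmf.prob (M E0) A)"
    using insert by (intro mult_left_mono) auto
  also have "\<dots> = exp (eps * card (insert x F)) * measure_pmf.prob (M E0) A"
    using insert by (simp add: exp_add[symmetric] distrib_left algebra_simps)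
  finally show ?case .
qed

lemma card_pairs:
  assumes "finite T" "finite W" "T \<inter> W = {}"
  shows "card ((\<lambda>(t,w). {t,w}) ` (T \<times> W)) = card T * card W"
proof -
  have "inj_on (\<lambda>(t,w). {t,w}) (T \<times> W)"
    using assms(3) by (auto simp: inj_on_def doubleton_eq_iff)
  thus ?thesis by (simp add: card_image card_cartesian_product)
qed

lemma nat_prod_bound:
  fixes a n :: nat
  assumes "1 \<le> a" "a \<le> n - 2" "n \<ge> 3"
  shows "n - 2 \<le> a * (n - 1 - a)"
proof -
  have "real (n - 2) \<le> real a * real (n - 1 - a)"
  proof -
    have "real (n-2) = real n - 2" "real (n - 1 - a) = real n - 1 - real a" using assms by auto
    moreover have "(real a - 1) * (real n - 2 - real a) \<ge> 0" using assms by auto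
    ultimately show ?thesis by (simp add: algebra_simps)
  qed
  thus ?thesis by (metis of_nat_le_iff of_nat_mult)
qed

lemma main_lemma:
  fixes V :: "nat set" and eps :: real and M :: "nat set set \<Rightarrow> nat set pmf"
  assumes fin: "finite V" and n: "card V = n" and n4: "n \<ge> 4"
    and e1: "3 * ln (real n) / real n < eps" and e2: "eps < 1/12"
    and dp: "dp_cut_algorithm V eps M"
  shows "\<exists>E. is_graph_on V E \<and>
     measure_pmf.expectation (M E) (\<lambda>S. real (cut_cost E S)) \<ge> real (OPT V E) + (1/8) * ln (real n) / eps"
proof -
  have n0: "real n > 0" using n4 by simp
  have ln1: "ln (real n) \<ge> 1"
  proof -
    have "exp 1 \<le> real n" using exp_le n4 by linarith
    hence "ln (exp 1) \<le> ln (real n)" by (intro ln_mono) auto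
    thus ?thesis by simp
  qed
  have ln4: "ln (real n) \<ge> 2 * ln 2"
  proof -
    have "ln (4::real) \<le> ln (real n)" using n4 by (intro ln_mono) auto
    moreover have "ln (4::real) = 2 * ln 2" using ln_mult[of 2 2] by simp
    ultimately show ?thesis by simp
  qed
  have epos: "eps > 0"
  proof -
    have "3 * ln (real n) / real n > 0" using ln1 n0 n4 by (intro divide_pos_pos) auto
    thus ?thesis using e1 by linarith
  qed
  define x where "x = ln (real n) / (2*eps)"
  have x_lt: "x < real n / 6"
  proof -
    have "3 * ln (real n) < eps * real n" using e1 n0 by (simp add: field_simps)
    thus ?thesis unfolding x_def using epos by (simp add: field_simps)
  qed
  have x_gt: "x > 6 * ln (real n)"
  proof -
    have "ln (real n) * (12 * eps) < ln (real n) * 1" using e2 ln1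
      by (intro mult_strict_left_mono) auto
    hence "ln (real n) * 12 * eps < ln (real n)" by (simp add: mult.assoc)
    thus ?thesis unfolding x_def using epos by (simp add: field_simps)
  qed
  define k where "k = nat \<lfloor>x\<rfloor>"
  have x0: "x \<ge> 0" using x_gt ln1 by linarith
  have k_le: "real k \<le> x" unfolding k_def using x0 by linarith
  have k_ge: "real k > x - 1" unfolding k_def using x0 by linarith
  have kn: "k \<le> n - 2" using k_le x_lt n4 by linarith
  define f where "f S = (if card S = 1 then the_elem S else the_elem (V - S))" for S :: "nat set"
  define B where "B v = f -` {v}" for v
  let ?P0 = "measure_pmf.prob (M (all_edges V))"
  have sumB: "(\<Sum>v\<in>V. ?P0 (B v)) \<le> 1"
  proof -
    have "disjoint_family_on B V" unfolding disjoint_family_on_def B_def by auto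
    hence "?P0 (\<Union>v\<in>V. B v) = (\<Sum>v\<in>V. ?P0 (B v))"
      using fin by (intro measure_pmf.finite_measure_finite_Union) auto
    moreover have "?P0 (\<Union>v\<in>V. B v) \<le> 1" by simp
    ultimately show ?thesis by simp
  qed
  obtain v where vV: "v \<in> V" and pv: "?P0 (B v) \<le> 1 / real n"
  proof (rule ccontr)
    assume "\<not> thesis"
    hence h: "\<forall>v\<in>V. ?P0 (B v) > 1 / real n" using that by force
    have Vne: "V \<noteq> {}" using n n4 by auto
    have "(\<Sum>v\<in>V. 1 / real n) < (\<Sum>v\<in>V. ?P0 (B v))"
      using h fin Vne by (intro sum_strict_mono) auto
    moreover have "(\<Sum>v\<in>V. 1 / real n) = 1" using n n0 by simp
    ultimately show False using sumB by linarith
  qed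
  have cVv: "card (V - {v}) = n - 1" using vV fin n by simp
  obtain U where U: "U \<subseteq> V - {v}" "card U = k" "finite U"
  proof -
    have "k \<le> card (V - {v})" using cVv kn by simp
    thus ?thesis using obtain_subset_with_card_n[of k "V - {v}"] that by blast
  qed
  define R where "R = (\<lambda>u. {v,u}) ` U"
  have cR: "card R = k" unfolding R_def using U
    by (subst card_image) (auto simp: inj_on_def doubleton_eq_iff)
  have R_sub: "R \<subseteq> all_edges V" unfolding R_def all_edges_def using U vV by (force simp: card_2_iff)
  have g0: "is_graph_on V (all_edges V)" by (simp add: is_graph_on_def)
  define E where "E = all_edges V - R"
  have gE: "is_graph_on V E" unfolding E_def is_graph_on_def by auto
  have finAll: "finite (all_edges V)" unfolding all_edges_def
    by (rule finite_subset[of _ "Pow V"]) (use fin in auto)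
  have finE: "finite E" unfolding E_def using finAll by simp
  have pB: "measure_pmf.prob (M E) (B v) \<le> 1/2"
  proof -
    have "measure_pmf.prob (M E) (B v) \<le> exp (eps * k) * ?P0 (B v)"
      unfolding E_def cR[symmetric] using dp_chain[OF dp g0 _ R_sub] U(3) R_def by auto
    also have "\<dots> \<le> exp (ln (real n) / 2) * (1 / real n)"
    proof (intro mult_mono)
      have "eps * k \<le> eps * x" using k_le epos by simp
      also have "eps * x = ln (real n) / 2" unfolding x_def using epos by simp
      finally show "exp (eps * k) \<le> exp (ln (real n) / 2)" by simp
    qed (use pv in auto)
    also have "\<dots> \<le> (real n / 2) * (1 / real n)"
    proof -
      have "ln (real n) / 2 \<le> ln (real n / 2)" using ln4 n0 by (simp add: ln_div)
      hence "exp (ln (real n) / 2) \<le> exp (ln (real n / 2))" by simp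
      hence "exp (ln (real n) / 2) \<le> real n / 2" using n0 by simp
      thus ?thesis using n0 by (intro mult_right_mono) auto
    qed
    also have "\<dots> = 1/2" using n0 by simp
    finally show ?thesis .
  qed
  have finCuts: "finite (cuts V)" unfolding cuts_def
    by (rule finite_subset[of _ "Pow V"]) (use fin in auto)
  have "V \<noteq> {v}"
  proof
    assume "V = {v}" hence "card V = 1" by simp
    thus False using n n4 by simp
  qed
  hence vcut: "{v} \<in> cuts V" unfolding cuts_def using vV by blast
  have optlow: "OPT V E \<le> cut_cost E S" if "S \<in> cuts V" for S
    unfolding OPT_def using finCuts that by (intro Min_le) auto
  have cv: "cut_cost E {v} \<le> n - 1 - k"
  proof -
    have "{e \<in> E. card (e \<inter> {v}) = 1} \<subseteq> (\<lambda>u. {v,u}) ` (V - {v} - U)"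
    proof
      fix e assume e: "e \<in> {e \<in> E. card (e \<inter> {v}) = 1}"
      hence eE: "e \<in> all_edges V" "e \<notin> R" unfolding E_def by auto
      then obtain a b where ab: "e = {a,b}" "a \<noteq> b" "a \<in> V" "b \<in> V"
        unfolding all_edges_def by (auto simp: card_2_iff)
      have "card (e \<inter> {v}) = 1" using e by simp
      hence "e \<inter> {v} \<noteq> {}" by (metis card.empty zero_neq_one)
      hence "v \<in> e" by auto
      then obtain u where u: "e = {v,u}" "u \<noteq> v" "u \<in> V" using ab by auto
      have "u \<notin> U" using eE(2) u unfolding R_def by auto
      thus "e \<in> (\<lambda>u. {v,u}) ` (V - {v} - U)" using u by auto
    qed
    hence "cut_cost E {v} \<le> card ((\<lambda>u. {v,u}) ` (V - {v} - U))"
      unfolding cut_cost_def using fin by (intro card_mono) auto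
    also have "\<dots> \<le> card (V - {v} - U)" by (rule card_image_le) (use fin in auto)
    also have "\<dots> = n - 1 - k" using U cVv by (simp add: card_Diff_subset)
    finally show ?thesis .
  qed
  have opt_ub: "OPT V E \<le> n - 1 - k" using optlow[OF vcut] cv by simp
  have big: "n - 2 \<le> cut_cost E S" if S: "S \<in> cuts V" "S \<notin> B v" for S
  proof -
    have SV: "S \<subseteq> V" "S \<noteq> {}" "S \<noteq> V" using S(1) unfolding cuts_def by auto
    define T where "T = (if v \<in> S then V - S else S)"
    define W where "W = V - T - {v}"
    have T_sub: "T \<subseteq> V - {v}" unfolding T_def using SV vV by auto
    have T_ne: "T \<noteq> {}" unfolding T_def using SV by auto
    have T_ne2: "T \<noteq> V - {v}"
    proof
      assume Tv: "T = V - {v}"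
      show False
      proof (cases "v \<in> S")
        case True
        hence "S = {v}" using Tv SV unfolding T_def by auto
        hence "f S = v" unfolding f_def by simp
        thus False using S(2) unfolding B_def by auto
      next
        case False
        hence Sv: "S = V - {v}" using Tv unfolding T_def by auto
        hence "card S = n - 1" using cVv by simp
        hence "card S \<noteq> 1" using n4 by simp
        moreover have "V - S = {v}" using Sv vV by auto
        ultimately have "f S = v" unfolding f_def by simp
        thus False using S(2) unfolding B_def by auto
      qed
    qed
    have finT: "finite T" using T_sub fin finite_subset by blast
    have a1: "1 \<le> card T" using T_ne finT by (simp add: Suc_le_eq card_gt_0_iff)
    have "card T < card (V - {v})" using T_sub T_ne2 fin by (intro psubset_card_mono) auto
    hence a2: "card T \<le> n - 2" using cVv by simp
    have cW: "card W = n - 1 - card T"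
    proof -
      have "V - T - {v} = (V - {v}) - T" by auto
      thus ?thesis using card_Diff_subset[OF finT T_sub] cVv unfolding W_def by simp
    qed
    have "(\<lambda>(t,w). {t,w}) ` (T \<times> W) \<subseteq> {e \<in> E. card (e \<inter> S) = 1}"
    proof
      fix e assume "e \<in> (\<lambda>(t,w). {t,w}) ` (T \<times> W)"
      then obtain t w where tw: "e = {t,w}" "t \<in> T" "w \<in> W" by auto
      have tv: "t \<noteq> v" "t \<in> V" using tw T_sub by auto
      have wv: "w \<noteq> v" "w \<in> V" "w \<notin> T" using tw unfolding W_def by auto
      have tw_ne: "t \<noteq> w" using tw wv by auto
      have "e \<in> all_edges V" unfolding all_edges_def using tw tv wv tw_ne by simp
      moreover have "e \<notin> R"
      proof -
        have "v \<notin> e" using tw tv wv by simp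
        moreover have "\<forall>r\<in>R. v \<in> r" unfolding R_def by blast
        ultimately show ?thesis by blast
      qed
      moreover have "card (e \<inter> S) = 1"
      proof (cases "v \<in> S")
        case True
        hence "t \<notin> S" "w \<in> S" using tw(2) wv tv unfolding T_def by auto
        hence "e \<inter> S = {w}" using tw by auto
        thus ?thesis by simp
      next
        case False
        hence "t \<in> S" "w \<notin> S" using tw(2) wv tv unfolding T_def by auto
        hence "e \<inter> S = {t}" using tw by auto
        thus ?thesis by simp
      qed
      ultimately show "e \<in> {e \<in> E. card (e \<inter> S) = 1}" unfolding E_def by auto
    qed
    hence "card ((\<lambda>(t,w). {t,w}) ` (T \<times> W)) \<le> cut_cost E S"
      unfolding cut_cost_def using finE by (intro card_mono) auto
    moreover have "card ((\<lambda>(t,w). {t,w}) ` (T \<times> W)) = card T * card W"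
      using finT fin unfolding W_def by (intro card_pairs) auto
    moreover have "n - 2 \<le> card T * (n - 1 - card T)"
      using nat_prod_bound[OF a1 a2] n4 by simp
    ultimately show ?thesis using cW by simp
  qed
  have supp: "set_pmf (M E) \<subseteq> cuts V" using dp gE unfolding dp_cut_algorithm_def by blast
  have finS: "finite (set_pmf (M E))" using supp finCuts finite_subset by blast
  have pw: "real (OPT V E) + (real k - 1) * indicator (- B v) S \<le> real (cut_cost E S)"
    if "S \<in> set_pmf (M E)" for S
  proof (cases "S \<in> B v")
    case True thus ?thesis using optlow[of S] that supp by auto
  next
    case False
    hence "n - 2 \<le> cut_cost E S" using big[of S] that supp by auto
    moreover have "real (n - 2) = real n - 2" "real (n - 1 - k) = real n - 1 - real k"
      using n4 kn by auto
    moreover have "real (OPT V E) \<le> real (n - 1 - k)" using opt_ub by linarith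
    moreover have "real (n - 2) \<le> real (cut_cost E S)" using \<open>n - 2 \<le> cut_cost E S\<close> by linarith
    moreover have "(real k - 1) * indicator (- B v) S = real k - 1" using False by simp
    ultimately show ?thesis by linarith
  qed
  have "measure_pmf.expectation (M E) (\<lambda>S. real (OPT V E) + (real k - 1) * indicator (- B v) S)
        \<le> measure_pmf.expectation (M E) (\<lambda>S. real (cut_cost E S))"
    using pw finS by (intro integral_mono_AE) (auto simp: AE_measure_pmf_iff integrable_measure_pmf_finite)
  moreover have "measure_pmf.expectation (M E) (\<lambda>S. real (OPT V E) + (real k - 1) * indicator (- B v) S)
        = real (OPT V E) + (real k - 1) * measure_pmf.prob (M E) (- B v)"
    using finS by (simp add: integrable_measure_pmf_finite)
  moreover have "measure_pmf.prob (M E) (- B v) = 1 - measure_pmf.prob (M E) (B v)"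
    using measure_pmf.prob_compl[of "B v" "M E"] by (simp add: Compl_eq_Diff_UNIV)
  moreover have "(real k - 1) * (1 - measure_pmf.prob (M E) (B v)) \<ge> (real k - 1) * (1/2)"
  proof -
    have "real k - 1 \<ge> 0" using k_ge x_gt ln1 by linarith
    thus ?thesis using pB by (intro mult_left_mono) auto
  qed
  moreover have "(real k - 1) * (1/2) \<ge> (1/8) * ln (real n) / eps"
  proof -
    have "x / 2 \<ge> 2" using x_gt ln1 by linarith
    hence "real k - 1 \<ge> x / 2" using k_ge by linarith
    moreover have "(1/8) * ln (real n) / eps = x / 4" unfolding x_def using epos by simp
    ultimately show ?thesis by simp
  qed
  ultimately show ?thesis using gE by (intro exI[of _ E]) auto
qed


theorem mainTheorem2:
  shows "\<exists>c::real. c > 0 \<and> (\<exists>n0::nat. \<forall>n \<ge> n0. \<forall>eps::real. \<forall>V::nat set.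
           \<forall>M::nat set set \<Rightarrow> nat set pmf.
           finite V \<longrightarrow> card V = n \<longrightarrow>
           3 * ln (real n) / real n < eps \<longrightarrow> eps < 1/12 \<longrightarrow>
           dp_cut_algorithm V eps M \<longrightarrow>
           (\<exists>E. is_graph_on V E \<and>
              measure_pmf.expectation (M E) (\<lambda>S. real (cut_cost E S))
                \<ge> real (OPT V E) + c * ln (real n) / eps))"
proof (intro exI[of _ "1/8"] conjI exI[of _ 4] allI impI)
  show "(0::real) < 1/8" by simp
next
  fix n :: nat and eps :: real and V :: "nat set" and M :: "nat set set \<Rightarrow> nat set pmf"
  assume "4 \<le> n" "finite V" "card V = n" "3 * ln (real n) / real n < eps" "eps < 1/12"
    "dp_cut_algorithm V eps M"
  thus "\<exists>E. is_graph_on V E \<and>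
              measure_pmf.expectation (M E) (\<lambda>S. real (cut_cost E S))
                \<ge> real (OPT V E) + (1/8) * ln (real n) / eps"
    using main_lemma by blast
qed

end
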